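(* Let $\alpha\in[0,1)\cup(1,2]$ and $c>0$, and let $s_{\alpha,c}$ be the SIGTRON function defined below. For $z\ge0$ and $b>0$ let $F(z;b)=\int_0^z\frac{1}{1+t^{1/b}}\,dt$. Define $L^S_{\alpha,c}:\mathbb R\to\mathbb R$ as follows. (1) If $\alpha\in(1,2]$: $L^S_{\alpha,c}(x)=-c_\alpha F\!\left(1+\frac{x}{c_\alpha};\alpha-1\right)+c_\alpha$ for $x\ge -c_\alpha$, and $L^S_{\alpha,c}(x)=-x$ otherwise. (2) If $\alpha\in[0,1)$: $L^S_{\alpha,c}(x)=c_\alpha F\!\left(1+\frac{x}{c_\alpha};1-\alpha\right)-c_\alpha-x$ for $x\le -c_\alpha$, and $L^S_{\alpha,c}(x)=0$ otherwise. Then $L^S_{\alpha,c}$ is differentiable on $\mathbb R$ and satisfies $\nabla L^S_{\alpha,c}(x)=s_{\alpha,c}(x)-1$ for all $x\in\mathbb R$ (so $L^S_{\alpha,c}$ is, up to an additive constant, the virtual SIGTRON-induced loss function, i.e. the function whose derivative is $s_{\alpha,c}-1$).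
   Context: For $c>0$ and $\alpha\ne1$, $c_\alpha=\frac{1}{\alpha-1}c^{1-\alpha}$ (so $c_\alpha>0$ for $\alpha>1$ and $c_\alpha<0$ for $\alpha<1$). The extended exponential is $\exp_{\alpha,c}(x)=c\left(1-\frac{x}{c_\alpha}\right)^{1/(1-\alpha)}$ with domain $\{x\ge c_\alpha\}$ if $0\le\alpha<1$ and $\{x<c_\alpha\}$ if $\alpha>1$. The extended asymmetric sigmoid is $\sigma_{\alpha,c}(x)=\frac{c}{c+\exp_{\alpha,c}(-x)}$ with domain $\{x\le -c_\alpha\}$ if $0\le\alpha<1$ and $\{x\ge -c_\alpha\}$ if $\alpha>1$ (with $\sigma_{\alpha,c}(-c_\alpha)=0$ for $\alpha>1$). SIGTRON is $s_{\alpha,c}(x)=\sigma_{\alpha,c}(x)$ for $x\in\mathrm{dom}(\sigma_{\alpha,c})$ and $s_{\alpha,c}(x)=\sigma_P(x)$ otherwise, where $\sigma_P(x)=1$ if $x\ge0$ and $0$ otherwise. The virtual SIGTRON-induced loss $L^S_{\alpha,c}$ is defined by the gradient equation $\nabla L^S_{\alpha,c}(x)=s_{\alpha,c}(x)-1$. *)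

theory Defs
  imports "HOL-Analysis.Analysis"
begin

definition c_alpha :: "real \<Rightarrow> real \<Rightarrow> real" where
  "c_alpha \<alpha> c = (1 / (\<alpha> - 1)) * c powr (1 - \<alpha>)"

text \<open>Extended exponential; only meaningful on its domain.\<close>
definition exp_ac :: "real \<Rightarrow> real \<Rightarrow> real \<Rightarrow> real" where
  "exp_ac \<alpha> c x = c * (1 - x / c_alpha \<alpha> c) powr (1 / (1 - \<alpha>))"

definition sigma_dom :: "real \<Rightarrow> real \<Rightarrow> real set" where
  "sigma_dom \<alpha> c = (if \<alpha> < 1 then {x. x \<le> - c_alpha \<alpha> c} else {x. x \<ge> - c_alpha \<alpha> c})"

text \<open>Extended asymmetric sigmoid, with the convention value 0 at the boundary point for alpha > 1.\<close>
definition sigma_ac :: "real \<Rightarrow> real \<Rightarrow> real \<Rightarrow> real" where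
  "sigma_ac \<alpha> c x = (if \<alpha> > 1 \<and> x = - c_alpha \<alpha> c then 0 else c / (c + exp_ac \<alpha> c (- x)))"

definition sigma_P :: "real \<Rightarrow> real" where
  "sigma_P x = (if x \<ge> 0 then 1 else 0)"

definition sigtron :: "real \<Rightarrow> real \<Rightarrow> real \<Rightarrow> real" where
  "sigtron \<alpha> c x = (if x \<in> sigma_dom \<alpha> c then sigma_ac \<alpha> c x else sigma_P x)"

definition F_int :: "real \<Rightarrow> real \<Rightarrow> real" where
  "F_int z b = integral {0..z} (\<lambda>t. 1 / (1 + t powr (1 / b)))"

definition L_S :: "real \<Rightarrow> real \<Rightarrow> real \<Rightarrow> real" where
  "L_S \<alpha> c x =
    (let ca = c_alpha \<alpha> c in
     if \<alpha> > 1 then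
       (if x \<ge> - ca then - ca * F_int (1 + x / ca) (\<alpha> - 1) + ca else - x)
     else
       (if x \<le> - ca then ca * F_int (1 + x / ca) (1 - \<alpha>) - ca - x else 0))"

end

theory Submission imports Defs begin

definition gg :: "real \<Rightarrow> real \<Rightarrow> real" where
  "gg b t = 1 / (1 + max t 0 powr (1 / b))"

lemma cont_maxpowr:
  assumes "p > 0" shows "continuous_on UNIV (\<lambda>t::real. max t 0 powr p)"
proof -
  have "isCont (\<lambda>t::real. max t 0 powr p) x" for x
    unfolding isCont_def
    by (rule tendsto_powr') (use assms in \<open>auto intro!: tendsto_eq_intros\<close>)
  then show ?thesis by (simp add: continuous_at_imp_continuous_on)
qed

lemma cont_gg: assumes "b > 0" shows "continuous_on UNIV (gg b)"
proof -
  have "continuous_on UNIV (\<lambda>t::real. max t 0 powr (1/b))" using cont_maxpowr assms by simp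
  moreover have "\<And>t. 1 + max t 0 powr (1/b) \<noteq> 0"
  proof -
    fix t :: real have "max t 0 powr (1/b) \<ge> 0" by simp
    then show "1 + max t 0 powr (1/b) \<noteq> 0" by linarith
  qed
  ultimately show ?thesis unfolding gg_def
    by (auto intro!: continuous_intros)
qed

definition Ft :: "real \<Rightarrow> real \<Rightarrow> real" where
  "Ft b z = (if z \<ge> 0 then F_int z b else z)"

lemma Ft_eq:
  assumes "b > 0" "a < 0" "a \<le> w"
  shows "Ft b w = integral {a..w} (gg b) - integral {a..0} (gg b)"
proof -
  have int: "gg b integrable_on {u..v}" for u v
    using cont_gg[OF assms(1)] by (intro integrable_continuous_interval) (auto intro: continuous_on_subset)
  show ?thesis
  proof (cases "w \<ge> 0")
    case True
    have "integral {a..w} (gg b) = integral {a..0} (gg b) + integral {0..w} (gg b)"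
      using Henstock_Kurzweil_Integration.integral_combine[where a=a and c=0 and b=w and f="gg b", OF _ _ int] True assms by linarith
    moreover have "integral {0..w} (gg b) = F_int w b"
      unfolding F_int_def by (intro integral_cong) (auto simp: gg_def max_def)
    ultimately show ?thesis using True by (simp add: Ft_def)
  next
    case False
    have "integral {a..0} (gg b) = integral {a..w} (gg b) + integral {w..0} (gg b)"
      using Henstock_Kurzweil_Integration.integral_combine[where a=a and c=w and b=0 and f="gg b", OF _ _ int] False assms by linarith
    moreover have "integral {w..0} (gg b) = integral {w..0} (\<lambda>_. 1::real)"
      by (intro integral_cong) (auto simp: gg_def max_def)
    ultimately show ?thesis using False by (simp add: Ft_def)
  qed
qed

lemma Ft_deriv:
  assumes "b > 0"
  shows "(Ft b has_real_derivative gg b z) (at z)"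
proof -
  define a where "a = min z 0 - 1"
  define B where "B = max z 0 + 1"
  have "((\<lambda>u. integral {a..u} (gg b)) has_vector_derivative gg b z) (at z within {a..B})"
    using cont_gg[OF assms] by (intro integral_has_vector_derivative) (auto intro: continuous_on_subset simp: a_def B_def)
  moreover have "at z within {a..B} = at z"
    by (rule at_within_Icc_at) (auto simp: a_def B_def)
  ultimately have "((\<lambda>u. integral {a..u} (gg b) - integral {a..0} (gg b)) has_real_derivative gg b z) (at z)"
    by (auto simp: has_real_derivative_iff_has_vector_derivative intro!: derivative_eq_intros)
  then show ?thesis
    by (rule has_field_derivative_transform_within_open[where S="{a<..}"])
       (use Ft_eq[OF assms, of a] in \<open>auto simp: a_def\<close>)
qed

lemma ca_pos: "\<alpha> > 1 \<Longrightarrow> c > 0 \<Longrightarrow> c_alpha \<alpha> c > 0"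
  by (simp add: c_alpha_def)
lemma ca_neg: "\<alpha> < 1 \<Longrightarrow> c > 0 \<Longrightarrow> c_alpha \<alpha> c < 0"
  by (simp add: c_alpha_def divide_pos_neg)

lemma case_gt:
  assumes "1 < \<alpha>" "c > 0"
  shows "(L_S \<alpha> c has_real_derivative (sigtron \<alpha> c x - 1)) (at x)"
proof -
  define ca where "ca = c_alpha \<alpha> c"
  define b where "b = \<alpha> - 1"
  have ca: "ca > 0" using ca_pos assms by (simp add: ca_def)
  have b: "b > 0" using assms by (simp add: b_def)
  have eq: "L_S \<alpha> c = (\<lambda>x. - ca * Ft b (1 + x / ca) + ca)"
  proof
    fix x
    have "x \<ge> - ca \<longleftrightarrow> 1 + x / ca \<ge> 0" using ca by (simp add: field_simps) linarith
    then show "L_S \<alpha> c x = - ca * Ft b (1 + x / ca) + ca"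
      using assms ca unfolding L_S_def Ft_def Let_def ca_def[symmetric] b_def
      by (auto simp: field_simps)
  qed
  have d1: "((\<lambda>x. 1 + x / ca) has_real_derivative 1 / ca) (at x)"
    using ca by (auto intro!: derivative_eq_intros)
  have "((\<lambda>x. - ca * Ft b (1 + x / ca) + ca) has_real_derivative (- ca * (gg b (1 + x/ca) * (1/ca)) + 0)) (at x)"
    by (intro DERIV_add DERIV_cmult DERIV_chain2[OF Ft_deriv[OF b] d1] DERIV_const)
  moreover have "- ca * (gg b (1 + x/ca) * (1/ca)) + 0 = sigtron \<alpha> c x - 1"
  proof -
    have l: "- ca * (gg b (1 + x/ca) * (1/ca)) + 0 = - gg b (1 + x/ca)" using ca by simp
    consider "x < - ca" | "x = - ca" | "x > - ca" by linarith
    then show ?thesis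
    proof cases
      case 1
      then have "1 + x/ca < 0" using ca by (simp add: field_simps)
      then have "gg b (1 + x/ca) = 1" by (simp add: gg_def)
      moreover have "sigtron \<alpha> c x = 0" using 1 ca assms
        by (simp add: sigtron_def sigma_dom_def sigma_P_def ca_def)
      ultimately show ?thesis using l by simp
    next
      case 2
      then have "1 + x/ca = 0" using ca by (simp add: field_simps)
      then have "gg b (1 + x/ca) = 1" by (simp add: gg_def)
      moreover have "sigtron \<alpha> c x = 0" using 2 ca assms
        by (simp add: sigtron_def sigma_dom_def sigma_ac_def ca_def)
      ultimately show ?thesis using l by simp
    next
      case 3
      define u where "u = 1 + x/ca"
      have u: "u > 0" using 3 ca by (simp add: field_simps u_def)
      define v where "v = u powr (1/b)"
      have v: "v > 0" using u by (simp add: v_def)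
      have "gg b u = 1 / (1 + v)" using u by (simp add: gg_def v_def)
      moreover have "exp_ac \<alpha> c (- x) = c / v"
      proof -
        have "1 - (- x) / ca = u" by (simp add: u_def)
        moreover have "1 / (1 - \<alpha>) = - (1/b)" using assms by (simp add: b_def field_simps)
        ultimately show ?thesis unfolding exp_ac_def ca_def[symmetric]
          by (simp add: v_def powr_minus divide_inverse)
      qed
      moreover have "sigtron \<alpha> c x = c / (c + exp_ac \<alpha> c (- x))" using 3 ca assms
        by (simp add: sigtron_def sigma_dom_def sigma_ac_def ca_def)
      moreover have "c / (c + c / v) = v / (1 + v)"
      proof -
        have "c + c / v = c * (1 + v) / v" using v by (simp add: field_simps)
        moreover have "c / (c * (1 + v) / v) = v / (1 + v)" using v assms(2) by simp
        ultimately show ?thesis by simp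
      qed
      moreover have "- (1 / (1 + v)) = v / (1 + v) - 1" using v
        by (simp add: field_simps)
      ultimately show ?thesis using l unfolding u_def[symmetric] by simp
    qed
  qed
  ultimately show ?thesis unfolding eq by simp
qed

lemma case_lt:
  assumes "0 \<le> \<alpha>" "\<alpha> < 1" "c > 0"
  shows "(L_S \<alpha> c has_real_derivative (sigtron \<alpha> c x - 1)) (at x)"
proof -
  define ca where "ca = c_alpha \<alpha> c"
  define b where "b = 1 - \<alpha>"
  have ca: "ca < 0" using ca_neg assms by (simp add: ca_def)
  have b: "b > 0" using assms by (simp add: b_def)
  have eq: "L_S \<alpha> c = (\<lambda>x. ca * Ft b (1 + x / ca) - ca - x)"
  proof
    fix x
    have "x \<le> - ca \<longleftrightarrow> 1 + x / ca \<ge> 0" using ca by (simp add: field_simps) linarith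
    then show "L_S \<alpha> c x = ca * Ft b (1 + x / ca) - ca - x"
      using assms ca unfolding L_S_def Ft_def Let_def ca_def[symmetric] b_def
      by (auto simp: field_simps)
  qed
  have d1: "((\<lambda>x. 1 + x / ca) has_real_derivative 1 / ca) (at x)"
    using ca by (auto intro!: derivative_eq_intros)
  have "((\<lambda>x. ca * Ft b (1 + x / ca) - ca - x) has_real_derivative (ca * (gg b (1 + x/ca) * (1/ca)) - 0 - 1)) (at x)"
    by (intro DERIV_diff DERIV_cmult DERIV_chain2[OF Ft_deriv[OF b] d1] DERIV_const DERIV_ident)
  moreover have "ca * (gg b (1 + x/ca) * (1/ca)) - 0 - 1 = sigtron \<alpha> c x - 1"
  proof -
    have l: "ca * (gg b (1 + x/ca) * (1/ca)) - 0 - 1 = gg b (1 + x/ca) - 1" using ca by simp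
    consider "x > - ca" | "x \<le> - ca" by linarith
    then show ?thesis
    proof cases
      case 1
      then have "1 + x/ca < 0" using ca by (simp add: field_simps)
      then have "gg b (1 + x/ca) = 1" by (simp add: gg_def)
      moreover have "sigtron \<alpha> c x = 1" using 1 ca assms
        by (simp add: sigtron_def sigma_dom_def sigma_P_def ca_def)
      ultimately show ?thesis using l by simp
    next
      case 2
      define u where "u = 1 + x/ca"
      have u: "u \<ge> 0" using 2 ca by (simp add: field_simps u_def)
      define v where "v = u powr (1/b)"
      have v: "v \<ge> 0" using u by (simp add: v_def)
      have "gg b u = 1 / (1 + v)" using u by (simp add: gg_def v_def)
      moreover have "exp_ac \<alpha> c (- x) = c * v"
      proof -
        have "1 - (- x) / ca = u" by (simp add: u_def)
        moreover have "1 / (1 - \<alpha>) = 1/b" using assms by (simp add: b_def)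
        ultimately show ?thesis unfolding exp_ac_def ca_def[symmetric]
          by (simp add: v_def)
      qed
      moreover have "sigtron \<alpha> c x = c / (c + exp_ac \<alpha> c (- x))" using 2 ca assms
        by (simp add: sigtron_def sigma_dom_def sigma_ac_def ca_def)
      moreover have "c / (c + c * v) = 1 / (1 + v)"
      proof -
        have "c + c * v = c * (1 + v)" by (simp add: algebra_simps)
        then show ?thesis using v assms(3) by simp
      qed
      ultimately show ?thesis using l unfolding u_def[symmetric] by simp
    qed
  qed
  ultimately show ?thesis unfolding eq by simp
qed

theorem lemma1:
  fixes \<alpha> c :: real
  assumes "(0 \<le> \<alpha> \<and> \<alpha> < 1) \<or> (1 < \<alpha> \<and> \<alpha> \<le> 2)"
    and "c > 0"
  shows "\<forall>x::real. L_S \<alpha> c differentiable (at x) \<and>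
           (L_S \<alpha> c has_real_derivative (sigtron \<alpha> c x - 1)) (at x)"
proof
  fix x
  have "(L_S \<alpha> c has_real_derivative (sigtron \<alpha> c x - 1)) (at x)"
    using assms case_gt case_lt by blast
  then show "L_S \<alpha> c differentiable (at x) \<and>
           (L_S \<alpha> c has_real_derivative (sigtron \<alpha> c x - 1)) (at x)"
    using real_differentiable_def by blast
qed

end
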